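(* Let $\tau>0$, $\Lambda\subset\mathbb{R}$ an open interval and $H:\Lambda\times\mathbb{R}\times\mathbb{R}^{2n}\to\mathbb{R}$ continuous with each $H(\lambda,t,\cdot)$ of class $C^2$, all partial derivatives continuous in $(\lambda,t,z)$, and $H(\lambda,t+\tau,z)=H(\lambda,t,z)$, $H(\lambda,-t,Nz)=H(\lambda,t,z)$ for all $(\lambda,t,z)$. Let $v_0$ solve $$\dot u(t)=J\nabla H_{\lambda,t}(u(t)),\quad u(t+\tau)=u(t),\quad u(-t)=Nu(t)\ \forall t\in\mathbb{R}\qquad(\ast)$$ for each $\lambda\in\Lambda$, and let $\gamma_\lambda:[0,\tau]\to{\rm Sp}(2n,\mathbb{R})$ be the fundamental matrix solution of $\dot Z=JH''_{\lambda,t}(v_0(t))Z$, $Z(0)=I$. If $(\mu,v_0)$ is a bifurcation point of $(\ast)$, then $\dot v(t)=JH''_{\mu,t}(v_0(t))v(t)$, $v(t+\tau)=v(t)$, $v(-t)=Nv(t)$ $\forall t$, has nontrivial solutions, i.e. $\nu_{1,\tau}(\gamma_\mu)\neq0$.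
   Context: $J=\begin{pmatrix}0&-I_n\\ I_n&0\end{pmatrix}$, $N=\begin{pmatrix}-I_n&0\\0&I_n\end{pmatrix}$; ${\rm Sp}(2n,\mathbb{R})=\{M:M^TJM=J\}$. $S_\tau=\mathbb{R}/\tau\mathbb{Z}$. $(\mu,v_0)$ is a bifurcation point of $(\ast)$ if each neighbourhood of it in $\Lambda\times W^{1,2}(S_\tau;\mathbb{R}^{2n})$ (equivalently $\Lambda\times C^1(S_\tau;\mathbb{R}^{2n})$) contains $(\lambda,v)$ with $v\ne v_0$ solving $(\ast)$ for $\lambda$. For $\gamma$ with $\gamma(\tau/2)=\begin{pmatrix}A&B\\C&D\end{pmatrix}$ ($n\times n$ blocks), $\nu_{1,\tau}(\gamma)=\dim{\rm Ker}(B)$. *)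

theory Defs
  imports "HOL-Analysis.Analysis"
begin

text \<open>Phase space R^{2n} is modelled as real^('n + 'n): the indices Inl i are the
first n coordinates (x), the indices Inr i the last n coordinates (y).\<close>

type_synonym ('n) phase = "real ^ ('n + 'n)"
type_synonym ('n) phasemat = "real ^ ('n + 'n) ^ ('n + 'n)"

definition Jmat :: "('n::finite) phasemat" where
  "Jmat = (\<chi> a b. case (a, b) of
              (Inl i, Inr j) \<Rightarrow> (if i = j then -1 else 0)
            | (Inr i, Inl j) \<Rightarrow> (if i = j then 1 else 0)
            | _ \<Rightarrow> 0)"

definition Nmat :: "('n::finite) phasemat" where
  "Nmat = (\<chi> a b. if a = b then (case a of Inl _ \<Rightarrow> -1 | Inr _ \<Rightarrow> 1) else 0)"

definition blockB :: "('n::finite) phasemat \<Rightarrow> real ^ 'n ^ 'n" where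
  "blockB M = (\<chi> i j. M $ Inl i $ Inr j)"

definition nu1 :: "real \<Rightarrow> (real \<Rightarrow> ('n::finite) phasemat) \<Rightarrow> nat" where
  "nu1 \<tau> \<gamma> = dim {x :: real ^ 'n. blockB (\<gamma> (\<tau> / 2)) *v x = 0}"

definition solves_star ::
  "real \<Rightarrow> (real \<Rightarrow> real \<Rightarrow> ('n::finite) phase \<Rightarrow> 'n phase) \<Rightarrow> real \<Rightarrow> (real \<Rightarrow> 'n phase) \<Rightarrow> bool" where
  "solves_star \<tau> gradH lam u \<longleftrightarrow>
     (\<forall>t. (u has_vector_derivative (Jmat *v gradH lam t (u t))) (at t)) \<and>
     (\<forall>t. u (t + \<tau>) = u t) \<and>
     (\<forall>t. u (- t) = Nmat *v u t)"

definition bifurcation_point ::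
  "real \<Rightarrow> real set \<Rightarrow> (real \<Rightarrow> real \<Rightarrow> ('n::finite) phase \<Rightarrow> 'n phase) \<Rightarrow> real \<Rightarrow> (real \<Rightarrow> 'n phase) \<Rightarrow> bool" where
  "bifurcation_point \<tau> \<Lambda> gradH \<mu> v0 \<longleftrightarrow>
     \<mu> \<in> \<Lambda> \<and>
     (\<forall>\<epsilon>>0. \<exists>lam\<in>\<Lambda>. \<exists>v. solves_star \<tau> gradH lam v \<and> v \<noteq> v0 \<and> \<bar>lam - \<mu>\<bar> < \<epsilon> \<and>
        (\<forall>t. norm (v t - v0 t) + norm (vector_derivative v (at t) - vector_derivative v0 (at t)) < \<epsilon>))"

end

theory Submission
  imports Defs
begin

lemma gronwall_sq:
  fixes u :: "real \<Rightarrow> 'a::real_inner" and u' :: "real \<Rightarrow> 'a"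
  assumes T: "0 \<le> T" and L: "0 \<le> L" and eta: "0 \<le> \<eta>"
    and der: "\<And>t. t \<in> {0..T} \<Longrightarrow> (u has_vector_derivative u' t) (at t within {0..T})"
    and bd: "\<And>t. t \<in> {0..T} \<Longrightarrow> norm (u' t) \<le> L * norm (u t) + \<eta>"
    and t: "t \<in> {0..T}"
  shows "(norm (u t))^2 \<le> ((norm (u 0))^2 + \<eta>^2) * exp ((2*L+1)*t)"
proof -
  define K where "K = 2*L+1"
  have K: "K \<ge> 1" using L by (simp add: K_def)
  define q where "q s = ((norm (u s))^2 + \<eta>^2/K) * exp (-K* s)" for s
  have qd: "(q has_real_derivative ((2*(u s \<bullet> u' s) - K*(norm (u s))^2 - \<eta>^2) * exp(-K* s))) (at s within {0..T})"
    if s: "s\<in>{0..T}" for s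
  proof -
    have "((\<lambda>s. u s \<bullet> u s) has_derivative (\<lambda>h. u s \<bullet> (h *\<^sub>R u' s) + (h *\<^sub>R u' s) \<bullet> u s)) (at s within {0..T})"
      by (rule has_derivative_inner) (use der[OF s] in \<open>auto simp: has_vector_derivative_def\<close>)
    moreover have "(\<lambda>h. u s \<bullet> (h *\<^sub>R u' s) + (h *\<^sub>R u' s) \<bullet> u s) = (*) (2*(u s \<bullet> u' s))"
      by (auto simp: fun_eq_iff inner_commute algebra_simps)
    ultimately have d1: "((\<lambda>s. (norm (u s))^2) has_real_derivative (2*(u s \<bullet> u' s))) (at s within {0..T})"
      by (simp add: has_field_derivative_def power2_norm_eq_inner)
    have "(q has_real_derivative ((2*(u s \<bullet> u' s)) * exp(-K* s) + ((norm (u s))^2 + \<eta>^2/K) * (exp (-K* s) * (-K)))) (at s within {0..T})"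
    proof -
      have d2: "((\<lambda>s. (norm (u s))^2 + \<eta>^2/K) has_real_derivative 2*(u s \<bullet> u' s) + 0) (at s within {0..T})"
        by (rule DERIV_add[OF d1 DERIV_const])
      have d3: "((\<lambda>s. exp (-K* s)) has_real_derivative exp (-K* s) * (-K)) (at s within {0..T})"
        by (auto intro!: derivative_eq_intros)
      show ?thesis using DERIV_mult[OF d2 d3] unfolding q_def by (simp add: algebra_simps)
    qed
    moreover have "(2*(u s \<bullet> u' s)) * exp(-K* s) + ((norm (u s))^2 + \<eta>^2/K) * (exp (-K* s) * (-K))
        = (2*(u s \<bullet> u' s) - K*(norm (u s))^2 - \<eta>^2) * exp(-K* s)"
      using K by (simp add: field_simps)
    ultimately show ?thesis by simp
  qed
  have nonpos: "(2*(u s \<bullet> u' s) - K*(norm (u s))^2 - \<eta>^2) * exp(-K* s) \<le> 0" if s: "s\<in>{0..T}" for s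
  proof -
    have "u s \<bullet> u' s \<le> norm (u s) * norm (u' s)" by (rule norm_cauchy_schwarz)
    also have "\<dots> \<le> norm (u s) * (L * norm (u s) + \<eta>)"
      by (rule mult_left_mono[OF bd[OF s]]) simp
    finally have a: "u s \<bullet> u' s \<le> norm (u s) * (L * norm (u s) + \<eta>)" .
    have b: "2 * norm (u s) * \<eta> \<le> (norm (u s))^2 + \<eta>^2"
      using sum_squares_bound[of "norm (u s)" \<eta>] by (simp add: power2_eq_square)
    have "2*(u s \<bullet> u' s) - K*(norm (u s))^2 - \<eta>^2 \<le> 0"
      using a b unfolding K_def by (simp add: algebra_simps power2_eq_square)
    then show ?thesis by (simp add: mult_nonpos_nonneg)
  qed
  have cont: "continuous_on {0..T} q"
    using qd by (rule DERIV_continuous_on)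
  have "q t \<le> q 0"
  proof -
    have der0: "\<exists>y. (q has_real_derivative y) (at x) \<and> y \<le> 0" if x: "0 < x" "x < t" for x
    proof -
      have "at x within {0..T} = at x" using t x by (intro at_within_Icc_at) auto
      then show ?thesis using qd[of x] nonpos[of x] x t by auto
    qed
    have "continuous_on {0..t} q" using t by (intro continuous_on_subset[OF cont]) auto
    then show ?thesis using DERIV_nonpos_imp_decreasing_open[of 0 t q] der0 t by auto
  qed
  then have "((norm (u t))^2 + \<eta>^2/K) \<le> ((norm (u 0))^2 + \<eta>^2/K) * exp (K*t)"
    unfolding q_def by (simp add: exp_minus field_simps)
  moreover have "\<eta>^2/K \<le> \<eta>^2" using K by (simp add: divide_le_eq mult_le_cancel_left1)
  moreover have "\<eta>^2/K \<ge> 0" using K by simp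
  ultimately show ?thesis unfolding K_def[symmetric]
    by (smt (verit, best) exp_gt_zero mult_right_mono)
qed


lemma norm_mv_le:
  fixes A :: "real^'n::finite^'m::finite"
  shows "norm (A *v x) \<le> real CARD('m) * real CARD('n) * norm A * norm x"
proof -
  have "\<bar>A $ i $ j\<bar> \<le> norm A" for i j
    using component_le_norm_cart[of "A$i" j] Finite_Cartesian_Product.norm_nth_le[of A i] by linarith
  then have "onorm ((*v) A) \<le> real CARD('m) * real CARD('n) * norm A"
    by (rule onorm_le_matrix_component)
  moreover have "norm (A *v x) \<le> onorm ((*v) A) * norm x"
    by (rule onorm[OF matrix_vector_mul_bounded_linear])
  ultimately show ?thesis
    using mult_right_mono[of "onorm ((*v) A)" "real CARD('m) * real CARD('n) * norm A" "norm x"]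
    by simp
qed

lemma onorm_mv_le:
  fixes A :: "real^'n::finite^'m::finite"
  shows "onorm ((*v) A) \<le> real CARD('m) * real CARD('n) * norm A"
proof -
  have "\<bar>A $ i $ j\<bar> \<le> norm A" for i j
    using component_le_norm_cart[of "A$i" j] Finite_Cartesian_Product.norm_nth_le[of A i] by linarith
  then show ?thesis
    by (rule onorm_le_matrix_component)
qed

lemma gronwall_at:
  fixes u :: "real \<Rightarrow> 'a::real_inner" and u' :: "real \<Rightarrow> 'a"
  assumes L: "0 \<le> L" and eta: "0 \<le> \<eta>"
    and der: "\<And>t. t \<in> {-T..T} \<Longrightarrow> (u has_vector_derivative u' t) (at t)"
    and bd: "\<And>t. t \<in> {-T..T} \<Longrightarrow> norm (u' t) \<le> L * norm (u t) + \<eta>"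
    and t: "t \<in> {-T..T}"
  shows "(norm (u t))^2 \<le> ((norm (u 0))^2 + \<eta>^2) * exp ((2*L+1)*T)"
proof -
  have T: "0 \<le> T" using t by auto
  have pos: "0 \<le> (norm (u 0))^2 + \<eta>^2" by simp
  show ?thesis
  proof (cases "0 \<le> t")
    case True
    have "(norm (u t))^2 \<le> ((norm (u 0))^2 + \<eta>^2) * exp ((2*L+1)*t)"
      by (rule gronwall_sq[OF T L eta, where u'=u'])
        (use der bd t True in \<open>auto intro: has_vector_derivative_at_within\<close>)
    also have "\<dots> \<le> ((norm (u 0))^2 + \<eta>^2) * exp ((2*L+1)*T)"
      using t L by (intro mult_left_mono[OF _ pos]) (auto intro!: mult_left_mono)
    finally show ?thesis .
  next
    case False
    define v where "v = u \<circ> uminus"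
    have dv: "(v has_vector_derivative (- u' (- s))) (at s within {0..T})" if s: "s \<in> {0..T}" for s
    proof -
      have "(v has_vector_derivative (-1) *\<^sub>R u' (- s)) (at s)"
        unfolding v_def
        by (rule vector_diff_chain_at) (use der[of "-s"] s in \<open>auto intro!: derivative_eq_intros\<close>)
      then show ?thesis by (simp add: has_vector_derivative_at_within)
    qed
    have bv: "norm (- u' (- s)) \<le> L * norm (v s) + \<eta>" if s: "s \<in> {0..T}" for s
      using bd[of "-s"] s by (auto simp: v_def)
    have "(norm (v (-t)))^2 \<le> ((norm (v 0))^2 + \<eta>^2) * exp ((2*L+1)*(-t))"
      by (rule gronwall_sq[OF T L eta, where u'="\<lambda>s. - u' (- s)"]) (use dv bv t False in auto)
    also have "\<dots> = ((norm (u 0))^2 + \<eta>^2) * exp ((2*L+1)*(-t))" by (simp add: v_def)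
    also have "\<dots> \<le> ((norm (u 0))^2 + \<eta>^2) * exp ((2*L+1)*T)"
    proof -
      have "(2*L+1)*(-t) \<le> (2*L+1)*T" using t L by (intro mult_left_mono) auto
      then show ?thesis by (intro mult_left_mono[OF _ pos]) auto
    qed
    finally show ?thesis by (simp add: v_def)
  qed
qed


lemma bl_mv_left: "bounded_linear (\<lambda>M::real^'n::finite^'m::finite. M *v c)"
proof (rule bounded_linear_intro)
  show "(M + M') *v c = M *v c + M' *v c" for M M' :: "real^'n^'m" by (rule matrix_vector_mult_add_rdistrib)
  show "(k *\<^sub>R M) *v c = k *\<^sub>R (M *v c)" for k and M :: "real^'n^'m"
    by (simp add: vec_eq_iff matrix_vector_mult_def sum_distrib_left mult.assoc)
  show "norm (M *v c) \<le> norm M * (real CARD('m) * real CARD('n) * norm c)" for M :: "real^'n^'m"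
    using norm_mv_le[of M c] by (simp add: algebra_simps)
qed

lemma grad_lip:
  fixes gradH :: "real \<Rightarrow> real \<Rightarrow> real^'m::finite \<Rightarrow> real^'m"
    and hessH :: "real \<Rightarrow> real \<Rightarrow> real^'m \<Rightarrow> real^'m^'m"
  assumes H_hess: "\<And>lam t z. lam \<in> \<Lambda> \<Longrightarrow> (gradH lam t has_derivative (\<lambda>h. hessH lam t z *v h)) (at z)"
    and hess_cont: "continuous_on (\<Lambda> \<times> UNIV \<times> UNIV) (\<lambda>(lam, t, z). hessH lam t z)"
    and lam: "lam \<in> \<Lambda>"
  shows "\<exists>C. \<forall>t\<in>{-T..T}. \<forall>a b. norm a \<le> R \<longrightarrow> norm b \<le> R \<longrightarrow>
            norm (gradH lam t a - gradH lam t b) \<le> C * norm (a - b)"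
proof -
  define cc where "cc = real CARD('m) * real CARD('m)"
  have cc: "cc \<ge> 0" by (simp add: cc_def)
  let ?K = "{lam} \<times> {-T..T} \<times> cball (0::real^'m) R"
  have "compact ?K" by (intro compact_Times) auto
  moreover have "continuous_on ?K (\<lambda>(lam, t, z). hessH lam t z)"
    by (rule continuous_on_subset[OF hess_cont]) (use lam in auto)
  ultimately have "compact ((\<lambda>(lam, t, z). hessH lam t z) ` ?K)"
    by (rule compact_continuous_image[rotated])
  then obtain B where B: "\<forall>M\<in>(\<lambda>(lam, t, z). hessH lam t z) ` ?K. norm M \<le> B"
    using compact_imp_bounded bounded_iff by metis
  show ?thesis
  proof (intro exI ballI allI impI)
    fix t :: real and a b :: "real^'m" assume t: "t \<in> {-T..T}" and a: "norm a \<le> R" and b: "norm b \<le> R"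
    show "norm (gradH lam t a - gradH lam t b) \<le> (cc * B) * norm (a - b)"
    proof (rule differentiable_bound[of "cball 0 R" "gradH lam t" "\<lambda>z h. hessH lam t z *v h"])
      show "convex (cball (0::real^'m) R)" by simp
      show "(gradH lam t has_derivative (\<lambda>h. hessH lam t z *v h)) (at z within cball 0 R)" for z
        using H_hess[OF lam] by (rule has_derivative_at_withinI)
      show "onorm (\<lambda>h. hessH lam t z *v h) \<le> cc * B" if z: "z \<in> cball 0 R" for z
      proof -
        have "norm (hessH lam t z) \<le> B" using B t z by force
        then have "cc * norm (hessH lam t z) \<le> cc * B" using cc by (rule mult_left_mono)
        moreover have "onorm (\<lambda>h. hessH lam t z *v h) \<le> cc * norm (hessH lam t z)"
          using onorm_mv_le[of "hessH lam t z"] by (simp add: cc_def)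
        ultimately show ?thesis by linarith
      qed
      show "a \<in> cball 0 R" "b \<in> cball 0 R" using a b by auto
    qed
  qed
qed


lemma grad_approx:
  fixes gradH :: "real \<Rightarrow> real \<Rightarrow> real^'m::finite \<Rightarrow> real^'m"
    and hessH :: "real \<Rightarrow> real \<Rightarrow> real^'m \<Rightarrow> real^'m^'m"
    and v0 :: "real \<Rightarrow> real^'m"
  assumes H_hess: "\<And>lam t z. lam \<in> \<Lambda> \<Longrightarrow> (gradH lam t has_derivative (\<lambda>h. hessH lam t z *v h)) (at z)"
    and hess_cont: "continuous_on (\<Lambda> \<times> UNIV \<times> UNIV) (\<lambda>(lam, t, z). hessH lam t z)"
    and opn: "open \<Lambda>" and mu: "\<mu> \<in> \<Lambda>" and v0c: "continuous_on UNIV v0" and e: "\<epsilon> > 0"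
  shows "\<exists>\<delta>>0. \<forall>lam t z. \<bar>lam - \<mu>\<bar> < \<delta> \<longrightarrow> t \<in> {-T..T} \<longrightarrow> norm (z - v0 t) < \<delta> \<longrightarrow>
           lam \<in> \<Lambda> \<and>
           norm (gradH lam t z - gradH lam t (v0 t) - hessH \<mu> t (v0 t) *v (z - v0 t)) \<le> \<epsilon> * norm (z - v0 t)"
proof -
  define cc where "cc = real CARD('m) * real CARD('m)"
  have cc: "cc \<ge> 0" by (simp add: cc_def)
  obtain r where r: "r > 0" "ball \<mu> r \<subseteq> \<Lambda>" using opn mu open_contains_ball by blast
  have "compact (v0 ` {-T..T})"
    by (rule compact_continuous_image) (auto intro: continuous_on_subset[OF v0c])
  then obtain R0 where R0: "\<forall>y\<in>v0 ` {-T..T}. norm y \<le> R0"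
    using compact_imp_bounded bounded_iff by metis
  let ?K = "cball \<mu> (r/2) \<times> {-T..T} \<times> cball (0::real^'m) (R0 + 1)"
  have Ksub: "?K \<subseteq> \<Lambda> \<times> UNIV \<times> UNIV" using r by (auto simp: subset_iff dist_norm)
  have "compact ?K" by (intro compact_Times) auto
  moreover have "continuous_on ?K (\<lambda>(lam, t, z). hessH lam t z)"
    by (rule continuous_on_subset[OF hess_cont Ksub])
  ultimately have "uniformly_continuous_on ?K (\<lambda>(lam, t, z). hessH lam t z)"
    by (intro compact_uniformly_continuous)
  moreover have "\<epsilon> / (cc + 1) > 0" using e cc by simp
  ultimately obtain d where d: "d > 0"
    and dd: "\<And>x x'. x \<in> ?K \<Longrightarrow> x' \<in> ?K \<Longrightarrow> dist x' x < d \<Longrightarrow>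
        dist ((\<lambda>(lam, t, z). hessH lam t z) x') ((\<lambda>(lam, t, z). hessH lam t z) x) < \<epsilon> / (cc + 1)"
    unfolding uniformly_continuous_on_def by metis
  define \<delta> where "\<delta> = min (r/2) (min 1 (d/2))"
  have \<delta>: "\<delta> > 0" using r d by (simp add: \<delta>_def)
  show ?thesis
  proof (intro exI[of _ \<delta>] conjI allI impI \<delta>)
    fix lam t and z :: "real^'m"
    assume lam: "\<bar>lam - \<mu>\<bar> < \<delta>" and t: "t \<in> {-T..T}" and z: "norm (z - v0 t) < \<delta>"
    have lamK: "lam \<in> cball \<mu> (r/2)" using lam by (simp add: \<delta>_def dist_real_def abs_minus_commute)
    then show "lam \<in> \<Lambda>" using r by (auto simp: dist_real_def)
    have v0t: "norm (v0 t) \<le> R0" using R0 t by auto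
    define S where "S = hessH \<mu> t (v0 t)"
    define f where "f y = gradH lam t y - S *v y" for y
    have "norm (f z - f (v0 t)) \<le> \<epsilon> * norm (z - v0 t)"
    proof (rule differentiable_bound[of "ball (v0 t) \<delta>" f "\<lambda>y h. (hessH lam t y - S) *v h"])
      show "convex (ball (v0 t) \<delta>)" by simp
      show "(f has_derivative (\<lambda>h. (hessH lam t y - S) *v h)) (at y within ball (v0 t) \<delta>)" for y
      proof -
        have "(f has_derivative (\<lambda>h. hessH lam t y *v h - S *v h)) (at y)"
          unfolding f_def
          by (intro has_derivative_diff H_hess bounded_linear.has_derivative[OF matrix_vector_mul_bounded_linear] has_derivative_ident)
            (use \<open>lam \<in> \<Lambda>\<close> in auto)
        then show ?thesis by (simp add: matrix_vector_mult_diff_rdistrib has_derivative_at_withinI)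
      qed
      show "onorm (\<lambda>h. (hessH lam t y - S) *v h) \<le> \<epsilon>" if y: "y \<in> ball (v0 t) \<delta>" for y
      proof -
        have yn: "norm (y - v0 t) < \<delta>" using y by (simp add: dist_norm norm_minus_commute)
        have yK: "(lam, t, y) \<in> ?K"
          using lamK t v0t yn norm_triangle_ineq[of "y - v0 t" "v0 t"] by (auto simp: \<delta>_def)
        have vK: "(\<mu>, t, v0 t) \<in> ?K" using t v0t r by auto
        have "dist (lam, t, y) (\<mu>, t, v0 t) \<le> dist lam \<mu> + dist y (v0 t)"
          using sqrt_sum_squares_le_sum_abs[of "dist lam \<mu>" "dist y (v0 t)"]
          by (simp add: dist_Pair_Pair)
        also have "\<dots> < d" using lam yn by (simp add: \<delta>_def dist_real_def dist_norm)
        finally have "dist (hessH lam t y) S < \<epsilon> / (cc + 1)"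
          using dd[OF vK yK] by (simp add: S_def)
        then have n: "norm (hessH lam t y - S) \<le> \<epsilon> / (cc + 1)" by (simp add: dist_norm)
        have "onorm (\<lambda>h. (hessH lam t y - S) *v h) \<le> cc * norm (hessH lam t y - S)"
          using onorm_mv_le[of "hessH lam t y - S"] by (simp add: cc_def)
        also have "\<dots> \<le> cc * (\<epsilon> / (cc + 1))" using n cc by (rule mult_left_mono)
        also have "\<dots> \<le> \<epsilon>" using cc e by (simp add: field_simps)
        finally show ?thesis .
      qed
      show "z \<in> ball (v0 t) \<delta>" "v0 t \<in> ball (v0 t) \<delta>" using z \<delta> by (auto simp: dist_norm norm_minus_commute)
    qed
    then show "norm (gradH lam t z - gradH lam t (v0 t) - hessH \<mu> t (v0 t) *v (z - v0 t)) \<le> \<epsilon> * norm (z - v0 t)"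
      by (simp add: f_def S_def matrix_vector_mult_diff_distrib algebra_simps)
  qed
qed

lemma Nmat_Inl: "((Nmat :: ('n::finite) phasemat) *v x) $ Inl i = - x $ Inl i"
  by (simp add: matrix_vector_mult_def Nmat_def if_distrib[where f="\<lambda>a. a * _"] cong: if_cong)
lemma Nmat_Inr: "((Nmat :: ('n::finite) phasemat) *v x) $ Inr i = x $ Inr i"
  by (simp add: matrix_vector_mult_def Nmat_def if_distrib[where f="\<lambda>a. a * _"] cong: if_cong)
lemma mv_Inl: "((M :: ('n::finite) phasemat) *v x) $ Inl i =
   (\<Sum>j\<in>UNIV. M $ Inl i $ Inl j * x $ Inl j) + (\<Sum>j\<in>UNIV. M $ Inl i $ Inr j * x $ Inr j)"
proof -
  have "(M *v x) $ Inl i = (\<Sum>b\<in>UNIV <+> UNIV. M $ Inl i $ b * x $ b)"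
    by (simp add: matrix_vector_mult_def UNIV_Plus_UNIV)
  also have "\<dots> = (\<Sum>j\<in>UNIV. M $ Inl i $ Inl j * x $ Inl j) + (\<Sum>j\<in>UNIV. M $ Inl i $ Inr j * x $ Inr j)"
    by (subst sum.Plus) (simp_all add: o_def)
  finally show ?thesis .
qed

theorem theorem6p1:
  fixes \<tau> :: real and \<Lambda> :: "real set" and \<mu> :: real
    and H :: "real \<Rightarrow> real \<Rightarrow> ('n::finite) phase \<Rightarrow> real"
    and gradH :: "real \<Rightarrow> real \<Rightarrow> 'n phase \<Rightarrow> 'n phase"
    and hessH :: "real \<Rightarrow> real \<Rightarrow> 'n phase \<Rightarrow> 'n phasemat"
    and v0 :: "real \<Rightarrow> 'n phase"
    and \<gamma> :: "real \<Rightarrow> real \<Rightarrow> 'n phasemat"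
  assumes tau_pos: "\<tau> > 0"
    and Lambda_int: "is_interval \<Lambda>" "open \<Lambda>" "\<Lambda> \<noteq> {}"
    and H_cont: "continuous_on (\<Lambda> \<times> UNIV \<times> UNIV) (\<lambda>(lam, t, z). H lam t z)"
    and H_grad: "\<And>lam t z. lam \<in> \<Lambda> \<Longrightarrow> (H lam t has_derivative (\<lambda>h. gradH lam t z \<bullet> h)) (at z)"
    and H_hess: "\<And>lam t z. lam \<in> \<Lambda> \<Longrightarrow> (gradH lam t has_derivative (\<lambda>h. hessH lam t z *v h)) (at z)"
    and grad_cont: "continuous_on (\<Lambda> \<times> UNIV \<times> UNIV) (\<lambda>(lam, t, z). gradH lam t z)"
    and hess_cont: "continuous_on (\<Lambda> \<times> UNIV \<times> UNIV) (\<lambda>(lam, t, z). hessH lam t z)"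
    and H_periodic: "\<And>lam t z. lam \<in> \<Lambda> \<Longrightarrow> H lam (t + \<tau>) z = H lam t z"
    and H_sym: "\<And>lam t z. lam \<in> \<Lambda> \<Longrightarrow> H lam (- t) (Nmat *v z) = H lam t z"
    and v0_sol: "\<And>lam. lam \<in> \<Lambda> \<Longrightarrow> solves_star \<tau> gradH lam v0"
    and gamma_init: "\<And>lam. lam \<in> \<Lambda> \<Longrightarrow> \<gamma> lam 0 = mat 1"
    and gamma_ode: "\<And>lam t. lam \<in> \<Lambda> \<Longrightarrow> t \<in> {0..\<tau>} \<Longrightarrow>
        (\<gamma> lam has_vector_derivative (Jmat ** hessH lam t (v0 t) ** \<gamma> lam t)) (at t within {0..\<tau>})"
    and bif: "bifurcation_point \<tau> \<Lambda> gradH \<mu> v0"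
  shows "(\<exists>v :: real \<Rightarrow> 'n phase. v \<noteq> (\<lambda>_. 0) \<and>
            (\<forall>t. (v has_vector_derivative (Jmat *v (hessH \<mu> t (v0 t) *v v t))) (at t)) \<and>
            (\<forall>t. v (t + \<tau>) = v t) \<and>
            (\<forall>t. v (- t) = Nmat *v v t))
         \<and> nu1 \<tau> (\<gamma> \<mu>) \<noteq> 0"
proof -
  have mu: "\<mu> \<in> \<Lambda>" using bif by (simp add: bifurcation_point_def)
  define cc where "cc = real CARD('n+'n) * real CARD('n+'n)"
  have cc: "cc \<ge> 0" by (simp add: cc_def)
  define S where "S t = hessH \<mu> t (v0 t)" for t
  define nJ where "nJ = cc * norm (Jmat :: 'n phasemat)"
  have nJ: "nJ \<ge> 0" using cc by (simp add: nJ_def)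
  have Jb: "\<And>x. norm ((Jmat :: 'n phasemat) *v x) \<le> nJ * norm x"
    using norm_mv_le unfolding nJ_def cc_def by (metis mult.commute mult.left_commute)
  have v0der: "\<And>lam t. lam \<in> \<Lambda> \<Longrightarrow> (v0 has_vector_derivative Jmat *v gradH lam t (v0 t)) (at t)"
    using v0_sol by (simp add: solves_star_def)
  have v0c: "continuous_on UNIV v0"
    by (rule continuous_at_imp_continuous_on) (use v0der[OF mu] has_vector_derivative_continuous in blast)
  have Sc: "continuous_on UNIV S"
  proof -
    have "continuous_on UNIV (\<lambda>t. (\<lambda>(lam, t, z). hessH lam t z) ((\<lambda>t. (\<mu>, t, v0 t)) t))"
      by (rule continuous_on_compose2[OF hess_cont]) (use mu in \<open>auto intro!: continuous_intros v0c\<close>)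
    then show ?thesis by (simp add: S_def)
  qed
  have LB: "\<exists>L\<ge>0. \<forall>t\<in>{-T..T}. \<forall>x. norm (Jmat *v (S t *v x)) \<le> L * norm x" for T
  proof -
    have "compact (S ` {-T..T})"
      by (rule compact_continuous_image) (auto intro: continuous_on_subset[OF Sc])
    then obtain B where B: "\<forall>y\<in>S ` {-T..T}. norm y \<le> B"
      using compact_imp_bounded bounded_iff by metis
    show ?thesis
    proof (intro exI[of _ "nJ * (cc * max B 0)"] conjI ballI allI)
      show "0 \<le> nJ * (cc * max B 0)" using nJ cc by simp
      fix t x assume t: "t \<in> {-T..T}"
      have "norm (Jmat *v (S t *v x)) \<le> nJ * norm (S t *v x)" by (rule Jb)
      also have "norm (S t *v x) \<le> cc * norm (S t) * norm x"
        using norm_mv_le[of "S t" x] by (simp add: cc_def)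
      also have "cc * norm (S t) * norm x \<le> cc * max B 0 * norm x"
      proof -
        have "norm (S t) \<le> B" using B t by blast
        then have "norm (S t) \<le> max B 0" by linarith
        then show ?thesis using cc by (intro mult_right_mono mult_left_mono) auto
      qed
      finally show "norm (Jmat *v (S t *v x)) \<le> nJ * (cc * max B 0) * norm x"
        using nJ by (simp add: mult_left_mono mult.assoc)
    qed
  qed
  have "\<forall>k::nat. \<exists>p. fst p \<in> \<Lambda> \<and> solves_star \<tau> gradH (fst p) (snd p) \<and> snd p \<noteq> v0 \<and>
           \<bar>fst p - \<mu>\<bar> < 1 / Suc k \<and> (\<forall>t. norm (snd p t - v0 t) < 1 / Suc k)"
  proof
    fix k :: nat
    have "(1::real) / Suc k > 0" by simp
    then obtain lam v where "lam \<in> \<Lambda>" "solves_star \<tau> gradH lam v" "v \<noteq> v0" "\<bar>lam - \<mu>\<bar> < 1 / Suc k"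
      and nv: "\<forall>t. norm (v t - v0 t) + norm (vector_derivative v (at t) - vector_derivative v0 (at t)) < 1 / Suc k"
      using bif unfolding bifurcation_point_def by blast
    moreover have "\<forall>t. norm (v t - v0 t) < 1 / Suc k"
    proof
      fix t
      have "0 \<le> norm (vector_derivative v (at t) - vector_derivative v0 (at t))" by simp
      then show "norm (v t - v0 t) < 1 / Suc k" using nv[rule_format, of t] by linarith
    qed
    ultimately show "\<exists>p. fst p \<in> \<Lambda> \<and> solves_star \<tau> gradH (fst p) (snd p) \<and> snd p \<noteq> v0 \<and>
           \<bar>fst p - \<mu>\<bar> < 1 / Suc k \<and> (\<forall>t. norm (snd p t - v0 t) < 1 / Suc k)"
      by (intro exI[of _ "(lam, v)"]) simp
  qed
  then obtain F where F: "\<forall>k::nat. fst (F k) \<in> \<Lambda> \<and> solves_star \<tau> gradH (fst (F k)) (snd (F k)) \<and> snd (F k) \<noteq> v0 \<and>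
           \<bar>fst (F k) - \<mu>\<bar> < 1 / Suc k \<and> (\<forall>t. norm (snd (F k) t - v0 t) < 1 / Suc k)"
    by (rule choice[THEN exE])
  define lamS where "lamS k = fst (F k)" for k
  define vS where "vS k = snd (F k)" for k
  have seq: "\<And>k. lamS k \<in> \<Lambda>" "\<And>k. solves_star \<tau> gradH (lamS k) (vS k)"
    "\<And>k. vS k \<noteq> v0" "\<And>k. \<bar>lamS k - \<mu>\<bar> < 1 / Suc k" "\<And>k t. norm (vS k t - v0 t) < 1 / Suc k"
    using F unfolding lamS_def vS_def by blast+
  define e where "e k t = vS k t - v0 t" for k t
  have vSder: "(vS k has_vector_derivative Jmat *v gradH (lamS k) t (vS k t)) (at t)" for k t
    using seq(2)[of k] by (simp add: solves_star_def)
  have eder: "(e k has_vector_derivative Jmat *v (gradH (lamS k) t (vS k t) - gradH (lamS k) t (v0 t))) (at t)" for k t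
    unfolding e_def matrix_vector_mult_diff_distrib
    by (rule has_vector_derivative_diff[OF vSder v0der[OF seq(1)]])
  have ebd: "norm (e k t) < 1 / Suc k" for k t using seq(5) by (simp add: e_def)
  have e0: "e k 0 \<noteq> 0" for k
  proof
    assume z: "e k 0 = 0"
    have "vS k t = v0 t" for t
    proof -
      define T where "T = \<bar>t\<bar>"
      have tT: "t \<in> {-T..T}" unfolding T_def by auto
      have "compact (v0 ` {-T..T})"
        by (rule compact_continuous_image) (auto intro: continuous_on_subset[OF v0c])
      then obtain R0 where R0: "\<forall>y\<in>v0 ` {-T..T}. norm y \<le> R0"
        using compact_imp_bounded bounded_iff by metis
      obtain C where C: "\<forall>s\<in>{-T..T}. \<forall>a b. norm a \<le> R0 + 1 \<longrightarrow> norm b \<le> R0 + 1 \<longrightarrow>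
            norm (gradH (lamS k) s a - gradH (lamS k) s b) \<le> C * norm (a - b)"
        using grad_lip[OF H_hess hess_cont seq(1)[of k]] by blast
      have vSb: "norm (vS k s) \<le> R0 + 1" if "s \<in> {-T..T}" for s
      proof -
        have "norm (vS k s) \<le> norm (e k s) + norm (v0 s)"
          using norm_triangle_ineq[of "e k s" "v0 s"] by (simp add: e_def)
        moreover have "norm (e k s) \<le> 1"
        proof -
          have "1 / real (Suc k) \<le> 1" by (simp add: divide_le_eq)
          then show ?thesis using ebd[of k s] by linarith
        qed
        ultimately show ?thesis using R0 that by force
      qed
      have "(norm (e k t))^2 \<le> ((norm (e k 0))^2 + 0^2) * exp ((2*(nJ * max C 0)+1)*T)"
      proof (rule gronwall_at[where u="e k" and T=T and L="nJ * max C 0" and \<eta>=0])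
        show "0 \<le> nJ * max C 0" using nJ by simp
        show "t \<in> {-T..T}" by (rule tT)
        fix s assume s: "s \<in> {-T..T}"
        show "(e k has_vector_derivative Jmat *v (gradH (lamS k) s (vS k s) - gradH (lamS k) s (v0 s))) (at s)"
          by (rule eder)
        have "norm (Jmat *v (gradH (lamS k) s (vS k s) - gradH (lamS k) s (v0 s)))
             \<le> nJ * norm (gradH (lamS k) s (vS k s) - gradH (lamS k) s (v0 s))" by (rule Jb)
        also have "\<dots> \<le> nJ * (max C 0 * norm (e k s))"
        proof (rule mult_left_mono[OF _ nJ])
          have "norm (v0 s) \<le> R0 + 1" using R0 s by force
          then have "norm (gradH (lamS k) s (vS k s) - gradH (lamS k) s (v0 s)) \<le> C * norm (e k s)"
            using C s vSb[OF s] unfolding e_def by blast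
          also have "\<dots> \<le> max C 0 * norm (e k s)" by (intro mult_right_mono) auto
          finally show "norm (gradH (lamS k) s (vS k s) - gradH (lamS k) s (v0 s)) \<le> max C 0 * norm (e k s)" .
        qed
        finally show "norm (Jmat *v (gradH (lamS k) s (vS k s) - gradH (lamS k) s (v0 s)))
             \<le> nJ * max C 0 * norm (e k s) + 0" by (simp add: mult.assoc)
      qed simp
      then have "e k t = 0" using z by simp
      then show ?thesis by (simp add: e_def)
    qed
    then show False using seq(3)[of k] by auto
  qed
  define n where "n k = norm (e k 0)" for k
  have npos: "n k > 0" for k using e0[of k] by (simp add: n_def)
  define W where "W k t = (1 / n k) *\<^sub>R e k t" for k t
  have W0: "W k 0 \<in> sphere 0 1" for k using npos[of k] by (simp add: W_def n_def)
  obtain c r where c: "c \<in> sphere 0 1" and r: "strict_mono r" and lim0': "((\<lambda>k. W k 0) \<circ> r) \<longlonglongrightarrow> c"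
    using compact_imp_seq_compact[OF compact_sphere, of 0 1] W0 unfolding seq_compact_def by meson
  define lr where "lr k = lamS (r k)" for k
  define Wr where "Wr k = W (r k)" for k
  have lim0: "(\<lambda>k. Wr k 0) \<longlonglongrightarrow> c" using lim0' by (simp add: Wr_def o_def)
  have Wr0: "norm (Wr k 0) = 1" for k using W0[of "r k"] by (simp add: Wr_def)
  define Wd where "Wd k t = (1 / n (r k)) *\<^sub>R (Jmat *v (gradH (lr k) t (vS (r k) t) - gradH (lr k) t (v0 t)))" for k t
  have Wder: "(Wr k has_vector_derivative Wd k t) (at t)" for k t
    unfolding Wr_def W_def Wd_def lr_def
    by (rule bounded_linear.has_vector_derivative[OF bounded_linear_scaleR_right eder])
  define \<rho> where "\<rho> k t = Wd k t - Jmat *v (S t *v Wr k t)" for k t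
  have rk: "k \<le> r k" for k using r by (rule seq_suble)
  have KS: "\<forall>\<^sub>F k in sequentially. \<forall>t\<in>{-T..T}. norm (\<rho> k t) \<le> \<epsilon> * norm (Wr k t)" if \<epsilon>: "\<epsilon> > 0" for T \<epsilon>
  proof -
    have "\<epsilon> / (nJ + 1) > 0" using \<epsilon> nJ by simp
    from grad_approx[OF H_hess hess_cont Lambda_int(2) mu v0c this, of T]
    obtain \<delta> where \<delta>: "\<delta> > 0" and GA: "\<And>lam t z. \<bar>lam - \<mu>\<bar> < \<delta> \<Longrightarrow> t \<in> {-T..T} \<Longrightarrow> norm (z - v0 t) < \<delta> \<Longrightarrow>
           norm (gradH lam t z - gradH lam t (v0 t) - hessH \<mu> t (v0 t) *v (z - v0 t)) \<le> \<epsilon> / (nJ + 1) * norm (z - v0 t)"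
      by blast
    obtain N where N: "inverse (real (Suc N)) < \<delta>" using reals_Archimedean[OF \<delta>] by blast
    show ?thesis unfolding eventually_sequentially
    proof (intro exI[of _ N] allI impI ballI)
      fix k t assume k: "N \<le> k" and t: "t \<in> {-T..T}"
      have small: "1 / real (Suc (r k)) < \<delta>"
      proof -
        have "1 / real (Suc (r k)) \<le> 1 / real (Suc N)"
          using k rk[of k] by (intro divide_left_mono) auto
        then show ?thesis using N by (simp add: inverse_eq_divide)
      qed
      have l: "\<bar>lr k - \<mu>\<bar> < \<delta>" using seq(4)[of "r k"] small by (simp add: lr_def)
      have z: "norm (vS (r k) t - v0 t) < \<delta>" using seq(5)[of "r k" t] small by simp
      define X where "X = gradH (lr k) t (vS (r k) t) - gradH (lr k) t (v0 t) - S t *v e (r k) t"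
      have X: "norm X \<le> \<epsilon> / (nJ + 1) * norm (e (r k) t)"
        using GA[OF l t z] by (simp add: X_def S_def e_def)
      have rho: "\<rho> k t = (1 / n (r k)) *\<^sub>R (Jmat *v X)"
        by (simp add: \<rho>_def Wd_def X_def Wr_def W_def matrix_vector_mult_scaleR matrix_vector_mult_diff_distrib
            scaleR_diff_right)
      have "norm (\<rho> k t) = (1 / n (r k)) * norm (Jmat *v X)"
        using npos[of "r k"] by (simp add: rho)
      also have "\<dots> \<le> (1 / n (r k)) * (nJ * (\<epsilon> / (nJ + 1) * norm (e (r k) t)))"
      proof (rule mult_left_mono)
        have "nJ * norm X \<le> nJ * (\<epsilon> / (nJ + 1) * norm (e (r k) t))" using X nJ by (rule mult_left_mono)
        then show "norm (Jmat *v X) \<le> nJ * (\<epsilon> / (nJ + 1) * norm (e (r k) t))" using Jb[of X] by linarith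
      qed (use npos[of "r k"] in simp)
      also have "\<dots> \<le> (1 / n (r k)) * (\<epsilon> * norm (e (r k) t))"
      proof -
        have "nJ * (\<epsilon> / (nJ + 1)) \<le> \<epsilon>" using nJ \<epsilon> by (simp add: field_simps)
        then have "nJ * (\<epsilon> / (nJ + 1)) * norm (e (r k) t) \<le> \<epsilon> * norm (e (r k) t)"
          by (rule mult_right_mono) simp
        then show ?thesis using npos[of "r k"]
          by (intro mult_left_mono) (simp_all add: mult.assoc)
      qed
      also have "\<dots> = \<epsilon> * norm (Wr k t)"
        using npos[of "r k"] by (simp add: Wr_def W_def)
      finally show "norm (\<rho> k t) \<le> \<epsilon> * norm (Wr k t)" .
    qed
  qed
  have WB: "\<exists>B\<ge>0. \<forall>\<^sub>F k in sequentially. \<forall>t\<in>{-T..T}. norm (Wr k t) \<le> B" for T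
  proof -
    obtain L where L: "L \<ge> 0" "\<forall>t\<in>{-T..T}. \<forall>x. norm (Jmat *v (S t *v x)) \<le> L * norm x"
      using LB by blast
    define B where "B = sqrt (exp ((2*(L+1)+1)*T))"
    show ?thesis
    proof (intro exI[of _ B] conjI)
      show "B \<ge> 0" by (simp add: B_def)
      show "\<forall>\<^sub>F k in sequentially. \<forall>t\<in>{-T..T}. norm (Wr k t) \<le> B"
        using KS[OF zero_less_one, of T]
      proof (rule eventually_mono)
        fix k assume K: "\<forall>t\<in>{-T..T}. norm (\<rho> k t) \<le> 1 * norm (Wr k t)"
        show "\<forall>t\<in>{-T..T}. norm (Wr k t) \<le> B"
        proof
          fix t assume t: "t \<in> {-T..T}"
          have "(norm (Wr k t))^2 \<le> ((norm (Wr k 0))^2 + 0^2) * exp ((2*(L+1)+1)*T)"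
          proof (rule gronwall_at[where u="Wr k" and u'="Wd k" and T=T and L="L+1" and \<eta>=0])
            show "0 \<le> L + 1" using L by simp
            show "t \<in> {-T..T}" by (rule t)
            fix s assume s: "s \<in> {-T..T}"
            show "(Wr k has_vector_derivative Wd k s) (at s)" by (rule Wder)
            have "Wd k s = Jmat *v (S s *v Wr k s) + \<rho> k s" by (simp add: \<rho>_def)
            then have "norm (Wd k s) \<le> norm (Jmat *v (S s *v Wr k s)) + norm (\<rho> k s)"
              by (simp add: norm_triangle_ineq)
            also have "\<dots> \<le> L * norm (Wr k s) + 1 * norm (Wr k s)"
              using L(2) s K by (intro add_mono) auto
            finally show "norm (Wd k s) \<le> (L + 1) * norm (Wr k s) + 0" by (simp add: algebra_simps)
          qed simp
          then show "norm (Wr k t) \<le> B" unfolding B_def using Wr0[of k] by (intro real_le_rsqrt) simp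
        qed
      qed
    qed
  qed
  have DB: "norm (Wd m s - Wd k s) \<le> L * norm (Wr m s - Wr k s) + (norm (\<rho> m s) + norm (\<rho> k s))"
    if "\<forall>t\<in>{-T..T}. \<forall>x. norm (Jmat *v (S t *v x)) \<le> L * norm x" "s \<in> {-T..T}" for m k s T L
  proof -
    have "Wd m s - Wd k s = Jmat *v (S s *v (Wr m s - Wr k s)) + (\<rho> m s - \<rho> k s)"
      by (simp add: \<rho>_def matrix_vector_mult_diff_distrib)
    then have "norm (Wd m s - Wd k s) \<le> norm (Jmat *v (S s *v (Wr m s - Wr k s))) + norm (\<rho> m s - \<rho> k s)"
      by (simp add: norm_triangle_ineq)
    also have "\<dots> \<le> L * norm (Wr m s - Wr k s) + (norm (\<rho> m s) + norm (\<rho> k s))"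
      using that by (intro add_mono norm_triangle_ineq4) auto
    finally show ?thesis .
  qed
  have UC: "\<exists>N. \<forall>m k t. N \<le> m \<and> N \<le> k \<and> t \<in> {-T..T} \<longrightarrow> dist (Wr m t) (Wr k t) < \<epsilon>"
    if \<epsilon>: "\<epsilon> > 0" for T \<epsilon>
  proof -
    obtain L where L: "L \<ge> 0" "\<forall>t\<in>{-T..T}. \<forall>x. norm (Jmat *v (S t *v x)) \<le> L * norm x"
      using LB by blast
    obtain B where B: "B \<ge> 0" "\<forall>\<^sub>F k in sequentially. \<forall>t\<in>{-T..T}. norm (Wr k t) \<le> B"
      using WB by blast
    define E where "E = exp ((2*L+1)*T)"
    have E: "E > 0" by (simp add: E_def)
    define a where "a = \<epsilon> / (2 * sqrt E)"
    have a: "a > 0" using \<epsilon> E by (simp add: a_def)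
    have a2: "2 * a^2 * E = \<epsilon>^2 / 2" using E by (simp add: a_def power_divide power_mult_distrib field_simps)
    define \<epsilon>1 where "\<epsilon>1 = a / (2*B+1)"
    have \<epsilon>1: "\<epsilon>1 > 0" using a B by (simp add: \<epsilon>1_def)
    have \<eta>a: "2 * (\<epsilon>1 * B) < a" using a B by (simp add: \<epsilon>1_def field_simps)
    obtain N1 where N1: "\<And>k. k \<ge> N1 \<Longrightarrow> \<forall>t\<in>{-T..T}. norm (Wr k t) \<le> B"
      using B(2) unfolding eventually_sequentially by blast
    obtain N2 where N2: "\<And>k. k \<ge> N2 \<Longrightarrow> \<forall>t\<in>{-T..T}. norm (\<rho> k t) \<le> \<epsilon>1 * norm (Wr k t)"
      using KS[OF \<epsilon>1, of T] unfolding eventually_sequentially by blast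
    obtain N3 where N3: "\<And>m k. m \<ge> N3 \<Longrightarrow> k \<ge> N3 \<Longrightarrow> dist (Wr m 0) (Wr k 0) < a"
      using LIMSEQ_imp_Cauchy[OF lim0] a unfolding Cauchy_def by blast
    have rb: "norm (\<rho> k s) \<le> \<epsilon>1 * B" if "k \<ge> max N1 N2" "s \<in> {-T..T}" for k s
    proof -
      have "norm (\<rho> k s) \<le> \<epsilon>1 * norm (Wr k s)" using N2[of k] that by auto
      also have "\<dots> \<le> \<epsilon>1 * B" using N1[of k] that \<epsilon>1 by (intro mult_left_mono) auto
      finally show ?thesis .
    qed
    show ?thesis
    proof (intro exI[of _ "max (max N1 N2) N3"] allI impI)
      fix m k t assume mkt: "max (max N1 N2) N3 \<le> m \<and> max (max N1 N2) N3 \<le> k \<and> t \<in> {-T..T}"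
      have "(norm (Wr m t - Wr k t))^2 \<le> ((norm (Wr m 0 - Wr k 0))^2 + (2 * (\<epsilon>1 * B))^2) * exp ((2*L+1)*T)"
      proof (rule gronwall_at[where u="\<lambda>t. Wr m t - Wr k t" and u'="\<lambda>t. Wd m t - Wd k t" and T=T and L=L
            and \<eta>="2 * (\<epsilon>1 * B)"])
        show "0 \<le> L" by (rule L)
        show "0 \<le> 2 * (\<epsilon>1 * B)" using \<epsilon>1 B by simp
        show "t \<in> {-T..T}" using mkt by blast
        fix s assume s: "s \<in> {-T..T}"
        show "((\<lambda>t. Wr m t - Wr k t) has_vector_derivative Wd m s - Wd k s) (at s)"
          by (intro has_vector_derivative_diff Wder)
        have "norm (\<rho> m s) + norm (\<rho> k s) \<le> \<epsilon>1 * B + \<epsilon>1 * B"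
          using rb[of m s] rb[of k s] mkt s by (intro add_mono) auto
        then show "norm (Wd m s - Wd k s) \<le> L * norm (Wr m s - Wr k s) + 2 * (\<epsilon>1 * B)"
          using DB[OF L(2) s, of m k] by linarith
      qed
      also have "\<dots> < (a^2 + a^2) * E"
      proof -
        have "norm (Wr m 0 - Wr k 0) < a" using N3[of m k] mkt by (simp add: dist_norm)
        then have "(norm (Wr m 0 - Wr k 0))^2 < a^2" by (intro power_strict_mono) auto
        moreover have "(2 * (\<epsilon>1 * B))^2 < a^2" using \<eta>a \<epsilon>1 B by (intro power_strict_mono) auto
        ultimately show ?thesis using E unfolding E_def by (intro mult_strict_right_mono) auto
      qed
      also have "\<dots> = \<epsilon>^2 / 2" using a2 by simp
      also have "\<dots> < \<epsilon>^2" using \<epsilon> by simp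
      finally have "(norm (Wr m t - Wr k t))^2 < \<epsilon>^2" .
      then show "dist (Wr m t) (Wr k t) < \<epsilon>"
        using \<epsilon> by (simp add: dist_norm power_less_imp_less_base)
    qed
  qed
  define w where "w t = lim (\<lambda>k. Wr k t)" for t
  have UCW: "\<exists>N. \<forall>k t. N \<le> k \<and> t \<in> {-T..T} \<longrightarrow> dist (Wr k t) (w t) < \<epsilon>"
    if \<epsilon>: "\<epsilon> > 0" for T \<epsilon>
  proof -
    obtain l where l: "\<forall>e>0. \<exists>N. \<forall>k t. N \<le> k \<and> t \<in> {-T..T} \<longrightarrow> dist (Wr k t) (l t) < e"
      using uniformly_convergent_eq_cauchy[of "\<lambda>t. t \<in> {-T..T}" Wr] UC[of _ T] by blast
    have "w t = l t" if t: "t \<in> {-T..T}" for t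
    proof -
      have "(\<lambda>k. Wr k t) \<longlonglongrightarrow> l t"
        unfolding lim_sequentially using l t by (metis le_eq_less_or_eq)
      then show ?thesis by (simp add: w_def limI)
    qed
    then show ?thesis using l \<epsilon> by metis
  qed
  have Wlim: "(\<lambda>k. Wr k t) \<longlonglongrightarrow> w t" for t
    unfolding lim_sequentially
  proof (intro allI impI)
    fix \<epsilon> :: real assume "\<epsilon> > 0"
    then obtain N where "\<forall>k s. N \<le> k \<and> s \<in> {-\<bar>t\<bar>..\<bar>t\<bar>} \<longrightarrow> dist (Wr k s) (w s) < \<epsilon>"
      using UCW by blast
    moreover have "t \<in> {-\<bar>t\<bar>..\<bar>t\<bar>}" by auto
    ultimately show "\<exists>no. \<forall>k\<ge>no. dist (Wr k t) (w t) < \<epsilon>" by blast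
  qed
  have vSper: "vS k (t + \<tau>) = vS k t" "vS k (- t) = Nmat *v vS k t" for k t
    using seq(2)[of k] by (simp_all add: solves_star_def)
  have v0per: "v0 (t + \<tau>) = v0 t" "v0 (- t) = Nmat *v v0 t" for t
    using v0_sol[OF mu] by (simp_all add: solves_star_def)
  have wper: "w (t + \<tau>) = w t" for t
  proof -
    have "(\<lambda>k. Wr k (t + \<tau>)) = (\<lambda>k. Wr k t)"
      by (simp add: Wr_def W_def e_def vSper v0per)
    then show ?thesis by (simp add: w_def)
  qed
  have wsym: "w (- t) = Nmat *v w t" for t
  proof -
    have "(\<lambda>k. Wr k (- t)) = (\<lambda>k. Nmat *v Wr k t)"
      by (simp add: Wr_def W_def e_def vSper v0per matrix_vector_mult_scaleR matrix_vector_mult_diff_distrib)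
    moreover have "(\<lambda>k. Nmat *v Wr k t) \<longlonglongrightarrow> Nmat *v w t"
      by (rule bounded_linear.tendsto[OF matrix_vector_mul_bounded_linear Wlim])
    ultimately show ?thesis using Wlim[of "-t"] LIMSEQ_unique by metis
  qed
  have wc: "w 0 = c" using Wlim[of 0] lim0 LIMSEQ_unique by metis
  have wder: "(w has_vector_derivative Jmat *v (S t *v w t)) (at t)" for t
  proof -
    define T where "T = \<bar>t\<bar> + 1"
    define I where "I = {-T..T}"
    obtain L where L: "L \<ge> 0" "\<forall>t\<in>{-T..T}. \<forall>x. norm (Jmat *v (S t *v x)) \<le> L * norm x"
      using LB by blast
    obtain B where B: "B \<ge> 0" "\<forall>\<^sub>F k in sequentially. \<forall>t\<in>{-T..T}. norm (Wr k t) \<le> B"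
      using WB by blast
    have "\<exists>g. \<forall>x\<in>I. (\<lambda>k. Wr k x) \<longlonglongrightarrow> g x \<and>
        (g has_derivative (\<lambda>h. h *\<^sub>R (Jmat *v (S x *v w x)))) (at x within I)"
    proof (rule has_derivative_sequence[where f'="\<lambda>k x h. h *\<^sub>R Wd k x"])
      show "convex I" by (simp add: I_def)
      show "(Wr k has_derivative (\<lambda>h. h *\<^sub>R Wd k x)) (at x within I)" for k x
        using Wder[of k x] by (simp add: has_vector_derivative_def has_derivative_at_withinI)
      show "0 \<in> I" by (simp add: I_def T_def)
      show "(\<lambda>k. Wr k 0) \<longlonglongrightarrow> c" by (rule lim0)
      fix \<epsilon> :: real assume \<epsilon>: "\<epsilon> > 0"
      have e1: "\<epsilon> / (2 * (L + 1)) > 0" using \<epsilon> L by simp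
      have e2: "\<epsilon> / (2 * (B + 1)) > 0" using \<epsilon> B by simp
      obtain N where N: "\<forall>k s. N \<le> k \<and> s \<in> {-T..T} \<longrightarrow> dist (Wr k s) (w s) < \<epsilon> / (2 * (L + 1))"
        using UCW[OF e1] by blast
      have ev: "\<forall>\<^sub>F k in sequentially. (\<forall>s\<in>{-T..T}. norm (\<rho> k s) \<le> \<epsilon> / (2 * (B + 1)) * norm (Wr k s))
           \<and> (\<forall>s\<in>{-T..T}. norm (Wr k s) \<le> B) \<and> k \<ge> N"
        using KS[OF e2, of T] B(2) eventually_ge_at_top[of N] by (intro eventually_conj)
      show "\<forall>\<^sub>F k in sequentially. \<forall>x\<in>I. \<forall>h. norm (h *\<^sub>R Wd k x - h *\<^sub>R (Jmat *v (S x *v w x))) \<le> \<epsilon> * norm h"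
        using ev
      proof (rule eventually_mono)
        fix k assume K: "(\<forall>s\<in>{-T..T}. norm (\<rho> k s) \<le> \<epsilon> / (2 * (B + 1)) * norm (Wr k s))
           \<and> (\<forall>s\<in>{-T..T}. norm (Wr k s) \<le> B) \<and> k \<ge> N"
        show "\<forall>x\<in>I. \<forall>h. norm (h *\<^sub>R Wd k x - h *\<^sub>R (Jmat *v (S x *v w x))) \<le> \<epsilon> * norm h"
        proof (intro ballI allI)
          fix x h assume x: "x \<in> I"
          have "Wd k x - Jmat *v (S x *v w x) = Jmat *v (S x *v (Wr k x - w x)) + \<rho> k x"
            by (simp add: \<rho>_def matrix_vector_mult_diff_distrib)
          then have "norm (Wd k x - Jmat *v (S x *v w x)) \<le> norm (Jmat *v (S x *v (Wr k x - w x))) + norm (\<rho> k x)"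
            by (simp add: norm_triangle_ineq)
          also have "\<dots> \<le> L * (\<epsilon> / (2 * (L + 1))) + \<epsilon> / (2 * (B + 1)) * B"
          proof (rule add_mono)
            have "norm (Jmat *v (S x *v (Wr k x - w x))) \<le> L * norm (Wr k x - w x)"
              using L(2) x by (auto simp: I_def)
            also have "\<dots> \<le> L * (\<epsilon> / (2 * (L + 1)))"
            proof (rule mult_left_mono[OF _ L(1)])
              have "x \<in> {-T..T}" using x by (simp add: I_def)
              then have "dist (Wr k x) (w x) < \<epsilon> / (2 * (L + 1))" using N K by blast
              then show "norm (Wr k x - w x) \<le> \<epsilon> / (2 * (L + 1))" by (simp add: dist_norm)
            qed
            finally show "norm (Jmat *v (S x *v (Wr k x - w x))) \<le> L * (\<epsilon> / (2 * (L + 1)))" .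
            have "norm (\<rho> k x) \<le> \<epsilon> / (2 * (B + 1)) * norm (Wr k x)" using K x by (auto simp: I_def)
            also have "\<dots> \<le> \<epsilon> / (2 * (B + 1)) * B" using K x e2 by (intro mult_left_mono) (auto simp: I_def)
            finally show "norm (\<rho> k x) \<le> \<epsilon> / (2 * (B + 1)) * B" .
          qed
          also have "\<dots> \<le> \<epsilon>"
          proof -
            have "L * (\<epsilon> / (2 * (L + 1))) \<le> \<epsilon> / 2" using L \<epsilon> by (simp add: field_simps)
            moreover have "\<epsilon> / (2 * (B + 1)) * B \<le> \<epsilon> / 2" using B \<epsilon> by (simp add: field_simps)
            ultimately show ?thesis by linarith
          qed
          finally have "norm (Wd k x - Jmat *v (S x *v w x)) \<le> \<epsilon>" .
          then have "\<bar>h\<bar> * norm (Wd k x - Jmat *v (S x *v w x)) \<le> \<bar>h\<bar> * \<epsilon>" by (rule mult_left_mono) simp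
          then show "norm (h *\<^sub>R Wd k x - h *\<^sub>R (Jmat *v (S x *v w x))) \<le> \<epsilon> * norm h"
            by (simp add: scaleR_diff_right[symmetric] mult.commute)
        qed
      qed
    qed
    then obtain g where g: "\<forall>x\<in>I. (\<lambda>k. Wr k x) \<longlonglongrightarrow> g x \<and>
        (g has_derivative (\<lambda>h. h *\<^sub>R (Jmat *v (S x *v w x)))) (at x within I)" by blast
    have tI: "-T < t" "t < T" by (auto simp: T_def)
    have gw: "g x = w x" if "x \<in> {-T<..<T}" for x
    proof -
      have "x \<in> I" using that by (simp add: I_def)
      then have "(\<lambda>k. Wr k x) \<longlonglongrightarrow> g x" using g by blast
      then show ?thesis using Wlim[of x] by (rule LIMSEQ_unique)
    qed
    have "t \<in> I" using tI by (simp add: I_def)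
    then have "(g has_derivative (\<lambda>h. h *\<^sub>R (Jmat *v (S t *v w t)))) (at t within I)" using g by blast
    moreover have "at t within I = at t" unfolding I_def using tI by (rule at_within_Icc_at)
    ultimately have "(g has_derivative (\<lambda>h. h *\<^sub>R (Jmat *v (S t *v w t)))) (at t)" by simp
    then have "(w has_derivative (\<lambda>h. h *\<^sub>R (Jmat *v (S t *v w t)))) (at t)"
      by (rule has_derivative_transform_within_open[of _ _ _ _ "{-T<..<T}"]) (use tI gw in auto)
    then show ?thesis by (simp add: has_vector_derivative_def)
  qed
  have part1: "\<exists>v :: real \<Rightarrow> 'n phase. v \<noteq> (\<lambda>_. 0) \<and>
            (\<forall>t. (v has_vector_derivative (Jmat *v (hessH \<mu> t (v0 t) *v v t))) (at t)) \<and>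
            (\<forall>t. v (t + \<tau>) = v t) \<and>
            (\<forall>t. v (- t) = Nmat *v v t)"
  proof (intro exI[of _ w] conjI allI)
    show "w \<noteq> (\<lambda>_. 0)" using wc c by (metis fun_eq_iff mem_sphere_0 norm_zero zero_neq_one)
    show "(w has_vector_derivative (Jmat *v (hessH \<mu> t (v0 t) *v w t))) (at t)" for t
      using wder[of t] by (simp add: S_def)
  qed (use wper wsym in auto)
  define \<Phi> where "\<Phi> = \<gamma> \<mu>"
  define w0 where "w0 = w 0"
  have w0ne: "w0 \<noteq> 0" using wc c by (auto simp: w0_def)
  obtain L where L: "L \<ge> 0" "\<forall>t\<in>{-\<tau>..\<tau>}. \<forall>x. norm (Jmat *v (S t *v x)) \<le> L * norm x"
    using LB by blast
  have wPhi: "w t = \<Phi> t *v w0" if t: "t \<in> {0..\<tau>}" for t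
  proof -
    have "(norm (w t - \<Phi> t *v w0))^2 \<le> ((norm (w 0 - \<Phi> 0 *v w0))^2 + 0^2) * exp ((2*L+1)*t)"
    proof (rule gronwall_sq[where u="\<lambda>t. w t - \<Phi> t *v w0" and u'="\<lambda>t. Jmat *v (S t *v (w t - \<Phi> t *v w0))"
          and T=\<tau> and L=L and \<eta>=0])
      show "0 \<le> \<tau>" using tau_pos by simp
      show "0 \<le> L" by (rule L)
      show "t \<in> {0..\<tau>}" by (rule t)
      fix s assume s: "s \<in> {0..\<tau>}"
      have d1: "(w has_vector_derivative Jmat *v (S s *v w s)) (at s within {0..\<tau>})"
        by (rule has_vector_derivative_at_within[OF wder])
      have d2: "((\<lambda>t. \<Phi> t *v w0) has_vector_derivative (Jmat ** S s ** \<Phi> s) *v w0) (at s within {0..\<tau>})"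
        unfolding \<Phi>_def S_def
        by (rule bounded_linear.has_vector_derivative[OF bl_mv_left gamma_ode[OF mu s]])
      have eq: "Jmat *v (S s *v w s) - (Jmat ** S s ** \<Phi> s) *v w0 = Jmat *v (S s *v (w s - \<Phi> s *v w0))"
        by (simp add: matrix_vector_mul_assoc[symmetric] matrix_vector_mult_diff_distrib)
      show "((\<lambda>t. w t - \<Phi> t *v w0) has_vector_derivative Jmat *v (S s *v (w s - \<Phi> s *v w0))) (at s within {0..\<tau>})"
        using has_vector_derivative_diff[OF d1 d2] unfolding eq .
      have "s \<in> {-\<tau>..\<tau>}" using s by auto
      then show "norm (Jmat *v (S s *v (w s - \<Phi> s *v w0))) \<le> L * norm (w s - \<Phi> s *v w0) + 0"
        using L(2) by simp
    qed simp
    moreover have "\<Phi> 0 = mat 1" using gamma_init[OF mu] by (simp add: \<Phi>_def)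
    ultimately have "(norm (w t - \<Phi> t *v w0))^2 \<le> 0" by (simp add: w0_def)
    then show ?thesis by simp
  qed
  have half: "w (\<tau>/2) = \<Phi> (\<tau>/2) *v w0" using tau_pos by (intro wPhi) auto
  have w0l: "w0 $ Inl i = 0" for i
  proof -
    have "w0 = Nmat *v w0" using wsym[of 0] by (simp add: w0_def)
    then have "w0 $ Inl i = - w0 $ Inl i" by (metis Nmat_Inl)
    then show ?thesis by simp
  qed
  have whl: "w (\<tau>/2) $ Inl i = 0" for i
  proof -
    have "w (\<tau>/2) = w (- (\<tau>/2))" using wper[of "- (\<tau>/2)"] by simp
    also have "\<dots> = Nmat *v w (\<tau>/2)" by (rule wsym)
    finally have "w (\<tau>/2) $ Inl i = - w (\<tau>/2) $ Inl i" by (metis Nmat_Inl)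
    then show ?thesis by simp
  qed
  define y where "y = (\<chi> j. w0 $ Inr j)"
  have By: "blockB (\<Phi> (\<tau>/2)) *v y = 0"
  proof (subst vec_eq_iff, intro allI)
    fix i
    have "(blockB (\<Phi> (\<tau>/2)) *v y) $ i = (\<Sum>j\<in>UNIV. \<Phi> (\<tau>/2) $ Inl i $ Inr j * w0 $ Inr j)"
      by (simp add: blockB_def y_def matrix_vector_mult_def)
    also have "\<dots> = (\<Phi> (\<tau>/2) *v w0) $ Inl i"
      by (simp add: mv_Inl w0l)
    also have "\<dots> = 0" using whl[of i] half by simp
    finally show "(blockB (\<Phi> (\<tau>/2)) *v y) $ i = 0 $ i" by simp
  qed
  have yne: "y \<noteq> 0"
  proof
    assume y0: "y = 0"
    have "w0 = 0"
    proof (subst vec_eq_iff, intro allI)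
      fix a show "w0 $ a = 0 $ a"
      proof (cases a)
        case (Inl i) then show ?thesis using w0l by simp
      next
        case (Inr j) then show ?thesis using y0 by (simp add: y_def vec_eq_iff)
      qed
    qed
    then show False using w0ne by simp
  qed
  have "nu1 \<tau> (\<gamma> \<mu>) \<noteq> 0"
    unfolding nu1_def using By yne by (auto simp: \<Phi>_def)
  then show ?thesis using part1 by blast
qed

end
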